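(* Let $c>0$, $N\ge1$, and let $v=(v_1,\dots,v_N)$ and $Q_i^{jk}=Q_i^{kj}$ ($1\le i,j,k\le N$) be sufficiently regular functions on $\mathcal{K}_{[s_0,s_1]}$. Put $P_i^{jk}:=-\tfrac13 Q_i^{jk}$, $w_i:=v_i+P_i^{jk}(t/s)^2v_jv_k$, $$V_i^0:=\tfrac12\sum_\alpha|\partial_\alpha w_i|^2+\tfrac12c^2w_i^2+P_i^{jk}(t/s)^2v_i\Big(\partial_tv_j\partial_tv_k+\sum_a\partial_av_j\partial_av_k+c^2v_jv_k\Big),$$ $$-V_i^a:=\partial_tw_i\partial_aw_i+P_i^{jk}(t/s)^2v_i\big(\partial_tv_j\partial_av_k+\partial_tv_k\partial_av_j\big),$$ $e_{Q,c}[v]:=2\sum_{i=1}^N\big(V_i^0-(x^a/t)V_i^a\big)$ (summation over repeated $j,k\in\{1,\dots,N\}$ and $a\in\{1,2\}$). There exists $\varepsilon_s>0$ small such that if, pointwise in $\mathcal{K}_{[s_0,s_1]}$, for all $i,j,k$ and $\alpha$, $$|(t/s)^2Q_i^{jk}v_i|+|(t/s)^2Q_i^{jk}v_j|+|(t/s)^2Q_i^{jk}v_k|\le\varepsilon_s,\qquad |(t/s)^2v_j\partial_\alpha Q_i^{jk}|+|(t/s)^2v_k\partial_\alpha Q_i^{jk}|\le\varepsilon_s,$$ then $$\tfrac14 e_{Q,c}[v]\le\sum_{i=1}^Ne_c[v_i]\le 4e_{Q,c}[v].$$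
   Context: Coordinates $(t,x)\in\mathbb{R}^{2+1}$, $r=|x|$, $s=\sqrt{t^2-r^2}$, $\partial_0=\partial_t$. $\mathcal{K}_{[s_0,s_1]}=\{(t,x): t>r+1,\ s_0^2\le t^2-r^2\le s_1^2\}$. For a scalar $u$, $e_c[u]:=|(s/t)\partial_tu|^2+\sum_{a=1,2}|\underline{\partial}_au|^2+c^2u^2$ with $\underline{\partial}_a=(x^a/t)\partial_t+\partial_a$. *)

theory Defs
  imports "HOL-Analysis.Analysis"
begin

type_synonym pt = "real \<times> real \<times> real"

definition tc :: "pt \<Rightarrow> real" where "tc p = fst p"
definition xc :: "nat \<Rightarrow> pt \<Rightarrow> real" where
  "xc a p = (if a = 1 then fst (snd p) else snd (snd p))"
definition rc :: "pt \<Rightarrow> real" where "rc p = sqrt ((xc 1 p)^2 + (xc 2 p)^2)"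
definition sc :: "pt \<Rightarrow> real" where "sc p = sqrt ((tc p)^2 - (rc p)^2)"

definition Kreg :: "real \<Rightarrow> real \<Rightarrow> pt set" where
  "Kreg s0 s1 = {p. tc p > rc p + 1 \<and> s0^2 \<le> (tc p)^2 - (rc p)^2 \<and> (tc p)^2 - (rc p)^2 \<le> s1^2}"

definition evec :: "nat \<Rightarrow> pt" where
  "evec \<alpha> = (if \<alpha> = 0 then (1,0,0) else if \<alpha> = 1 then (0,1,0) else (0,0,1))"

definition pd :: "nat \<Rightarrow> (pt \<Rightarrow> real) \<Rightarrow> pt \<Rightarrow> real" where
  "pd \<alpha> f p = frechet_derivative f (at p) (evec \<alpha>)"

definition ts2 :: "pt \<Rightarrow> real" where "ts2 p = (tc p / sc p)^2"

definition ec :: "real \<Rightarrow> (pt \<Rightarrow> real) \<Rightarrow> pt \<Rightarrow> real" where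
  "ec c u p = ((sc p / tc p) * pd 0 u p)^2
     + (\<Sum>a\<in>{1,2}. ((xc a p / tc p) * pd 0 u p + pd a u p)^2) + c^2 * (u p)^2"

definition Pc :: "(nat \<Rightarrow> nat \<Rightarrow> nat \<Rightarrow> pt \<Rightarrow> real) \<Rightarrow> nat \<Rightarrow> nat \<Rightarrow> nat \<Rightarrow> pt \<Rightarrow> real" where
  "Pc Q i j k p = - (1/3) * Q i j k p"

definition wf :: "nat \<Rightarrow> (nat \<Rightarrow> pt \<Rightarrow> real) \<Rightarrow> (nat \<Rightarrow> nat \<Rightarrow> nat \<Rightarrow> pt \<Rightarrow> real) \<Rightarrow> nat \<Rightarrow> pt \<Rightarrow> real" where
  "wf N v Q i p = v i p + (\<Sum>j\<in>{1..N}. \<Sum>k\<in>{1..N}. Pc Q i j k p * ts2 p * v j p * v k p)"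

definition V0 :: "nat \<Rightarrow> real \<Rightarrow> (nat \<Rightarrow> pt \<Rightarrow> real) \<Rightarrow> (nat \<Rightarrow> nat \<Rightarrow> nat \<Rightarrow> pt \<Rightarrow> real) \<Rightarrow> nat \<Rightarrow> pt \<Rightarrow> real" where
  "V0 N c v Q i p = (1/2) * (\<Sum>\<alpha>\<in>{0,1,2}. (pd \<alpha> (wf N v Q i) p)^2) + (1/2) * c^2 * (wf N v Q i p)^2
     + (\<Sum>j\<in>{1..N}. \<Sum>k\<in>{1..N}. Pc Q i j k p * ts2 p * v i p *
          (pd 0 (v j) p * pd 0 (v k) p + (\<Sum>a\<in>{1,2}. pd a (v j) p * pd a (v k) p) + c^2 * v j p * v k p))"

text \<open>Va a = V_i^a (note the paper defines -V_i^a).\<close>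
definition Va :: "nat \<Rightarrow> (nat \<Rightarrow> pt \<Rightarrow> real) \<Rightarrow> (nat \<Rightarrow> nat \<Rightarrow> nat \<Rightarrow> pt \<Rightarrow> real) \<Rightarrow> nat \<Rightarrow> nat \<Rightarrow> pt \<Rightarrow> real" where
  "Va N v Q i a p = - (pd 0 (wf N v Q i) p * pd a (wf N v Q i) p
     + (\<Sum>j\<in>{1..N}. \<Sum>k\<in>{1..N}. Pc Q i j k p * ts2 p * v i p *
          (pd 0 (v j) p * pd a (v k) p + pd 0 (v k) p * pd a (v j) p)))"

definition eQc :: "nat \<Rightarrow> real \<Rightarrow> (nat \<Rightarrow> nat \<Rightarrow> nat \<Rightarrow> pt \<Rightarrow> real) \<Rightarrow> (nat \<Rightarrow> pt \<Rightarrow> real) \<Rightarrow> pt \<Rightarrow> real" where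
  "eQc N c Q v p = 2 * (\<Sum>i\<in>{1..N}. V0 N c v Q i p - (\<Sum>a\<in>{1,2}. (xc a p / tc p) * Va N v Q i a p))"

end

theory Submission
  imports Defs
begin


lemma pd_add: assumes "f differentiable (at p)" "g differentiable (at p)"
  shows "pd \<alpha> (\<lambda>q. f q + g q) p = pd \<alpha> f p + pd \<alpha> g p"
proof -
  have d: "((\<lambda>q. f q + g q) has_derivative (\<lambda>h. frechet_derivative f (at p) h + frechet_derivative g (at p) h)) (at p)"
    using assms by (intro has_derivative_add frechet_derivative_works[THEN iffD1])
  then show ?thesis unfolding pd_def by (simp flip: frechet_derivative_at[OF d])
qed

lemma pd_mult: assumes "f differentiable (at p)" "g differentiable (at p)"
  shows "pd \<alpha> (\<lambda>q. f q * g q :: real) p = pd \<alpha> f p * g p + f p * pd \<alpha> g p"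
proof -
  have d: "((\<lambda>q. f q * g q) has_derivative (\<lambda>h. f p * frechet_derivative g (at p) h + frechet_derivative f (at p) h * g p)) (at p)"
    using assms by (intro has_derivative_mult frechet_derivative_works[THEN iffD1])
  then show ?thesis unfolding pd_def by (simp add: add.commute flip: frechet_derivative_at[OF d])
qed

lemma pd_sum: assumes "finite A" "\<And>j. j \<in> A \<Longrightarrow> f j differentiable (at p)"
  shows "pd \<alpha> (\<lambda>q. \<Sum>j\<in>A. f j q :: real) p = (\<Sum>j\<in>A. pd \<alpha> (f j) p)"
proof -
  have d: "((\<lambda>q. \<Sum>j\<in>A. f j q) has_derivative (\<lambda>h. \<Sum>j\<in>A. frechet_derivative (f j) (at p) h)) (at p)"
    using assms by (intro has_derivative_sum) (auto intro: frechet_derivative_works[THEN iffD1])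
  then show ?thesis unfolding pd_def by (simp flip: frechet_derivative_at[OF d])
qed

lemma pd_cmult: assumes "f differentiable (at p)"
  shows "pd \<alpha> (\<lambda>q. c * f q :: real) p = c * pd \<alpha> f p"
proof -
  have d: "((\<lambda>q. c * f q) has_derivative (\<lambda>h. c * frechet_derivative f (at p) h)) (at p)"
    using assms by (intro has_derivative_mult_right frechet_derivative_works[THEN iffD1])
  then show ?thesis unfolding pd_def by (simp flip: frechet_derivative_at[OF d])
qed

definition gD :: "pt \<Rightarrow> real" where "gD q = (fst q)^2 - (fst (snd q))^2 - (snd (snd q))^2"

lemma ts2_eq: "gD q > 0 \<Longrightarrow> ts2 q = (fst q)^2 / gD q"
  unfolding ts2_def sc_def rc_def tc_def xc_def gD_def
  by (simp add: power_divide)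

lemma f0d: "((\<lambda>q::pt. fst q) has_derivative (\<lambda>h. fst h)) (at p)"
  by (rule has_derivative_fst[OF has_derivative_ident])
lemma f1d: "((\<lambda>q::pt. fst (snd q)) has_derivative (\<lambda>h. fst (snd h))) (at p)"
  by (rule has_derivative_fst[OF has_derivative_snd[OF has_derivative_ident]])
lemma f2d: "((\<lambda>q::pt. snd (snd q)) has_derivative (\<lambda>h. snd (snd h))) (at p)"
  by (rule has_derivative_snd[OF has_derivative_snd[OF has_derivative_ident]])

lemma gD_hasder: "(gD has_derivative (\<lambda>h. 2 * fst h * fst p - 2 * fst (snd h) * fst (snd p) - 2 * snd (snd h) * snd (snd p))) (at p)"
proof -
  have "(gD has_derivative (\<lambda>h. of_nat 2 * fst h * fst p ^ (2-1) - of_nat 2 * fst (snd h) * fst (snd p) ^ (2-1) - of_nat 2 * snd (snd h) * snd (snd p) ^ (2-1))) (at p)"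
    unfolding gD_def by (intro has_derivative_diff has_derivative_power f0d f1d f2d)
  then show ?thesis by simp
qed

lemma gD_cont: "continuous_on UNIV gD"
  unfolding gD_def by (intro continuous_intros)

lemma gD_open: "open {q. gD q > 0}"
  using open_Collect_less[OF continuous_on_const gD_cont] by simp

lemma ts2_hasder: assumes "gD p > 0"
  shows "(ts2 has_derivative (\<lambda>h. - (fst p ^ 2) * (inverse (gD p) * (2 * fst h * fst p - 2 * fst (snd h) * fst (snd p) - 2 * snd (snd h) * snd (snd p)) * inverse (gD p)) + (of_nat 2 * fst h * fst p ^ (2-1)) / gD p)) (at p)"
proof -
  have "((\<lambda>q. (fst q)^2 / gD q) has_derivative (\<lambda>h. - (fst p ^ 2) * (inverse (gD p) * (2 * fst h * fst p - 2 * fst (snd h) * fst (snd p) - 2 * snd (snd h) * snd (snd p)) * inverse (gD p)) + (of_nat 2 * fst h * fst p ^ (2-1)) / gD p)) (at p)"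
    apply (rule has_derivative_divide[OF has_derivative_power[OF f0d] gD_hasder])
    using assms by simp
  then show ?thesis
  proof (rule has_derivative_transform_within_open[where s="{q. gD q > 0}"])
    show "open {q. gD q > 0}" by (rule gD_open)
    show "p \<in> {q. gD q > 0}" using assms by simp
    fix x assume "x \<in> {q. gD q > 0}"
    then show "(fst x)^2 / gD x = ts2 x" using ts2_eq[of x] by simp
  qed
qed



type_synonym R4 = "real \<times> real \<times> real \<times> real"

lemma sq_tri: "(a::real) \<le> b + c \<Longrightarrow> 0 \<le> a \<Longrightarrow> 0 \<le> b \<Longrightarrow> 0 \<le> c \<Longrightarrow> a^2 \<le> 2*b^2 + 2*c^2"
proof -
  assume h: "a \<le> b + c" "0 \<le> a" "0 \<le> b" "0 \<le> c"
  have 1: "a^2 \<le> (b+c)^2" using h by (intro power_mono) auto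
  have 2: "(b+c)^2 = b*b + 2*(b*c) + c*c" by (simp add: power2_eq_square algebra_simps)
  have 3: "2*b^2+2*c^2 = 2*(b*b) + 2*(c*c)" by (simp add: power2_eq_square)
  have 4: "0 \<le> b*b - 2*(b*c) + c*c" using zero_le_square[of "b-c"] by (simp add: algebra_simps)
  show ?thesis using 1 2 3 4 by linarith
qed

lemma core:
  fixes Z Dz W :: "nat \<Rightarrow> R4" and Ev :: "nat \<Rightarrow> nat \<Rightarrow> nat \<Rightarrow> R4"
    and \<pi> \<rho> :: "nat \<Rightarrow> nat \<Rightarrow> nat \<Rightarrow> real" and u :: "nat \<Rightarrow> real" and N :: nat
  assumes N: "N \<ge> 1"
  and W: "\<And>i. i \<in> {1..N} \<Longrightarrow> W i = Z i + (\<Sum>j\<in>{1..N}. \<Sum>k\<in>{1..N}. (\<pi> i j k * u k) *\<^sub>R Dz j + (\<pi> i j k * u j) *\<^sub>R Dz k + Ev i j k)"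
  and Dz: "\<And>j. j \<in> {1..N} \<Longrightarrow> norm (Dz j) \<le> norm (Z j)"
  and pk: "\<And>i j k. i \<in> {1..N} \<Longrightarrow> j \<in> {1..N} \<Longrightarrow> k \<in> {1..N} \<Longrightarrow> \<bar>\<pi> i j k * u k\<bar> \<le> \<epsilon>"
  and pj: "\<And>i j k. i \<in> {1..N} \<Longrightarrow> j \<in> {1..N} \<Longrightarrow> k \<in> {1..N} \<Longrightarrow> \<bar>\<pi> i j k * u j\<bar> \<le> \<epsilon>"
  and Evb: "\<And>i j k. i \<in> {1..N} \<Longrightarrow> j \<in> {1..N} \<Longrightarrow> k \<in> {1..N} \<Longrightarrow> norm (Ev i j k) \<le> K * \<epsilon> * norm (Z k)"
  and rho: "\<And>i j k. i \<in> {1..N} \<Longrightarrow> j \<in> {1..N} \<Longrightarrow> k \<in> {1..N} \<Longrightarrow> \<bar>\<rho> i j k\<bar> \<le> \<epsilon>"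
  and eps: "\<epsilon> \<ge> 0" "K \<ge> 0" "8 * \<epsilon> * (K+2) * (real N)^2 \<le> 1"
  shows "(1/4) * (\<Sum>i\<in>{1..N}. norm (W i)^2 + (\<Sum>j\<in>{1..N}. \<Sum>k\<in>{1..N}. \<rho> i j k * inner (Z j) (Z k))) \<le> (\<Sum>i\<in>{1..N}. norm (Z i)^2)
    \<and> (\<Sum>i\<in>{1..N}. norm (Z i)^2) \<le> 4 * (\<Sum>i\<in>{1..N}. norm (W i)^2 + (\<Sum>j\<in>{1..N}. \<Sum>k\<in>{1..N}. \<rho> i j k * inner (Z j) (Z k)))"
proof -
  define I where "I = {1..N}"
  define M where "M = (\<Sum>j\<in>I. norm (Z j))"
  define E where "E = (\<Sum>i\<in>I. norm (Z i)^2)"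
  have cardI: "card I = N" unfolding I_def by simp
  have finI: "finite I" unfolding I_def by simp
  have M0: "M \<ge> 0" unfolding M_def by (simp add: sum_nonneg)
  have E0: "E \<ge> 0" unfolding E_def by (simp add: sum_nonneg)
  have MM: "M^2 \<le> N * E"
    using sum_squared_le_sum_of_squares[of "\<lambda>j. norm (Z j)" I] unfolding M_def E_def cardI
    by (simp add: mult.commute)
  define R where "R i = W i - Z i" for i
  have Rb: "norm (R i) \<le> \<epsilon> * (K+2) * N * M" if i: "i \<in> I" for i
  proof -
    have "norm (R i) = norm (\<Sum>j\<in>I. \<Sum>k\<in>I. (\<pi> i j k * u k) *\<^sub>R Dz j + (\<pi> i j k * u j) *\<^sub>R Dz k + Ev i j k)"
      using W[of i] i unfolding R_def I_def by simp
    also have "\<dots> \<le> (\<Sum>j\<in>I. norm (\<Sum>k\<in>I. (\<pi> i j k * u k) *\<^sub>R Dz j + (\<pi> i j k * u j) *\<^sub>R Dz k + Ev i j k))"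
      by (rule norm_sum)
    also have "\<dots> \<le> (\<Sum>j\<in>I. \<Sum>k\<in>I. norm ((\<pi> i j k * u k) *\<^sub>R Dz j + (\<pi> i j k * u j) *\<^sub>R Dz k + Ev i j k))"
      by (intro sum_mono norm_sum)
    also have "\<dots> \<le> (\<Sum>j\<in>I. \<Sum>k\<in>I. \<epsilon> * norm (Z j) + (K+1) * \<epsilon> * norm (Z k))"
    proof (intro sum_mono)
      fix j k assume j: "j \<in> I" and k: "k \<in> I"
      have a: "norm ((\<pi> i j k * u k) *\<^sub>R Dz j) \<le> \<epsilon> * norm (Z j)"
        unfolding norm_scaleR using pk[of i j k] Dz[of j] i j k eps unfolding I_def
        by (intro mult_mono) auto
      have b: "norm ((\<pi> i j k * u j) *\<^sub>R Dz k) \<le> \<epsilon> * norm (Z k)"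
        unfolding norm_scaleR using pj[of i j k] Dz[of k] i j k eps unfolding I_def
        by (intro mult_mono) auto
      have c: "norm (Ev i j k) \<le> K * \<epsilon> * norm (Z k)" using Evb[of i j k] i j k unfolding I_def by simp
      have "norm ((\<pi> i j k * u k) *\<^sub>R Dz j + (\<pi> i j k * u j) *\<^sub>R Dz k + Ev i j k)
         \<le> norm ((\<pi> i j k * u k) *\<^sub>R Dz j) + norm ((\<pi> i j k * u j) *\<^sub>R Dz k) + norm (Ev i j k)"
        by (meson add_mono norm_triangle_ineq order_trans order_refl)
      then show "norm ((\<pi> i j k * u k) *\<^sub>R Dz j + (\<pi> i j k * u j) *\<^sub>R Dz k + Ev i j k) \<le> \<epsilon> * norm (Z j) + (K+1) * \<epsilon> * norm (Z k)"
        using a b c by (simp add: algebra_simps)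
    qed
    also have "\<dots> = N * \<epsilon> * M + N * ((K+1) * \<epsilon>) * M"
      unfolding M_def by (simp add: sum.distrib cardI sum_distrib_left[symmetric] mult.assoc)
    also have "\<dots> = \<epsilon> * (K+2) * N * M" by (simp add: algebra_simps)
    finally show ?thesis .
  qed
  have R2: "(\<Sum>i\<in>I. norm (R i)^2) \<le> E / 64"
  proof -
    have "(\<Sum>i\<in>I. norm (R i)^2) \<le> (\<Sum>i\<in>I. (\<epsilon> * (K+2) * N * M)^2)"
      using Rb by (intro sum_mono power_mono) auto
    also have "\<dots> = (\<epsilon> * (K+2) * N)^2 * N * M^2" by (simp add: cardI power_mult_distrib)
    also have "\<dots> \<le> (\<epsilon> * (K+2) * N)^2 * N * (N * E)"
      using MM by (intro mult_left_mono) auto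
    also have "\<dots> = (\<epsilon> * (K+2) * N^2)^2 * E" by (simp add: power2_eq_square algebra_simps)
    also have "\<dots> \<le> (1/8)^2 * E"
      using eps E0 by (intro mult_right_mono power_mono) auto
    finally show ?thesis by (simp add: power2_eq_square field_simps)
  qed
  define C where "C = (\<Sum>i\<in>I. \<Sum>j\<in>I. \<Sum>k\<in>I. \<rho> i j k * inner (Z j) (Z k))"
  have Cb: "\<bar>C\<bar> \<le> E / 8"
  proof -
    have "\<bar>C\<bar> \<le> (\<Sum>i\<in>I. \<bar>\<Sum>j\<in>I. \<Sum>k\<in>I. \<rho> i j k * inner (Z j) (Z k)\<bar>)"
      unfolding C_def by (rule sum_abs)
    also have "\<dots> \<le> (\<Sum>i\<in>I. \<Sum>j\<in>I. \<bar>\<Sum>k\<in>I. \<rho> i j k * inner (Z j) (Z k)\<bar>)"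
      by (intro sum_mono sum_abs)
    also have "\<dots> \<le> (\<Sum>i\<in>I. \<Sum>j\<in>I. \<Sum>k\<in>I. \<bar>\<rho> i j k * inner (Z j) (Z k)\<bar>)"
      by (intro sum_mono sum_abs)
    also have "\<dots> \<le> (\<Sum>i\<in>I. \<Sum>j\<in>I. \<Sum>k\<in>I. \<epsilon> * (norm (Z j) * norm (Z k)))"
    proof (intro sum_mono)
      fix i j k assume "i \<in> I" "j \<in> I" "k \<in> I"
      then show "\<bar>\<rho> i j k * inner (Z j) (Z k)\<bar> \<le> \<epsilon> * (norm (Z j) * norm (Z k))"
        unfolding abs_mult using rho[of i j k] eps unfolding I_def
        by (intro mult_mono) (auto simp: Cauchy_Schwarz_ineq2)
    qed
    also have "\<dots> = N * \<epsilon> * M^2"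
      unfolding M_def by (simp add: cardI sum_distrib_left[symmetric] sum_distrib_right[symmetric] power2_eq_square)
    also have "\<dots> \<le> N * \<epsilon> * (N * E)" using MM eps by (intro mult_left_mono) auto
    also have "\<dots> = (\<epsilon> * N^2) * E" by (simp add: power2_eq_square)
    also have "\<dots> \<le> (1/8) * E"
    proof (intro mult_right_mono E0)
      have "8 * \<epsilon> * 1 * N^2 \<le> 8 * \<epsilon> * (K+2) * N^2" using eps by (intro mult_right_mono mult_left_mono) auto
      then show "\<epsilon> * N^2 \<le> 1/8" using eps by simp
    qed
    finally show ?thesis by simp
  qed
  have up: "norm (W i)^2 \<le> 2 * norm (Z i)^2 + 2 * norm (R i)^2" for i
    by (rule sq_tri) (auto simp: R_def norm_triangle_sub[of "W i" "Z i"] intro: order_trans[OF norm_triangle_ineq])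
  have lo: "norm (Z i)^2 \<le> 2 * norm (W i)^2 + 2 * norm (R i)^2" for i
    by (rule sq_tri) (auto simp: R_def norm_minus_commute intro: order_trans[OF norm_triangle_sub])
  have S1: "(\<Sum>i\<in>I. norm (W i)^2) \<le> 2 * E + 2 * (\<Sum>i\<in>I. norm (R i)^2)"
  proof -
    have "(\<Sum>i\<in>I. norm (W i)^2) \<le> (\<Sum>i\<in>I. 2 * norm (Z i)^2 + 2 * norm (R i)^2)" by (rule sum_mono) (rule up)
    also have "\<dots> = 2 * E + 2 * (\<Sum>i\<in>I. norm (R i)^2)" by (simp add: E_def sum.distrib sum_distrib_left)
    finally show ?thesis .
  qed
  have S2: "E \<le> 2 * (\<Sum>i\<in>I. norm (W i)^2) + 2 * (\<Sum>i\<in>I. norm (R i)^2)"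
  proof -
    have "E \<le> (\<Sum>i\<in>I. 2 * norm (W i)^2 + 2 * norm (R i)^2)" unfolding E_def by (rule sum_mono) (rule lo)
    also have "\<dots> = 2 * (\<Sum>i\<in>I. norm (W i)^2) + 2 * (\<Sum>i\<in>I. norm (R i)^2)" by (simp add: sum.distrib sum_distrib_left)
    finally show ?thesis .
  qed
  have EQ: "(\<Sum>i\<in>I. norm (W i)^2 + (\<Sum>j\<in>I. \<Sum>k\<in>I. \<rho> i j k * inner (Z j) (Z k))) = (\<Sum>i\<in>I. norm (W i)^2) + C"
    unfolding C_def by (simp add: sum.distrib)
  show ?thesis using EQ S1 S2 R2 Cb E0 unfolding I_def[symmetric] E_def[symmetric] by linarith
qed



lemma Kreg_facts:
  assumes "p \<in> Kreg s0 s1"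
  shows "tc p > 0" "gD p > 0" "sc p > 0" "(sc p / tc p)^2 + (xc 1 p / tc p)^2 + (xc 2 p / tc p)^2 = 1"
    "ts2 p = (tc p)^2 / gD p" "ts2 p > 0"
    "\<bar>xc 1 p\<bar> \<le> gD p" "\<bar>xc 2 p\<bar> \<le> gD p" "(xc 1 p)^2 + (xc 2 p)^2 \<le> tc p * gD p"
    "sc p / tc p \<le> 1" "\<bar>xc 1 p / tc p\<bar> \<le> 1" "\<bar>xc 2 p / tc p\<bar> \<le> 1" "sc p \<ge> 0"
proof -
  define t x1 x2 where "t = tc p" "x1 = xc 1 p" "x2 = xc 2 p"
  define r where "r = rc p"
  have r2: "r^2 = x1^2 + x2^2" unfolding r_def rc_def t_x1_x2_def by simp
  have r0: "r \<ge> 0" unfolding r_def rc_def by simp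
  have tr: "t > r + 1" using assms unfolding Kreg_def t_x1_x2_def r_def by simp
  have gDe: "gD p = t^2 - r^2" using r2 unfolding gD_def t_x1_x2_def tc_def xc_def by simp
  have G: "t^2 - r^2 \<ge> t + r" 
  proof -
    have "t^2 - r^2 = (t - r) * (t + r)" by (simp add: power2_eq_square algebra_simps)
    also have "\<dots> \<ge> 1 * (t + r)" using tr r0 by (intro mult_right_mono) auto
    finally show ?thesis by simp
  qed
  show t0: "tc p > 0" using tr r0 unfolding t_x1_x2_def by simp
  show g0: "gD p > 0" using G tr r0 gDe by simp
  have sce: "sc p = sqrt (t^2 - r^2)" unfolding sc_def t_x1_x2_def r_def by simp
  show s0: "sc p > 0" using g0 gDe sce by simp
  then show "sc p \<ge> 0" by simp
  have sc2: "(sc p)^2 = t^2 - r^2" using sce g0 gDe by simp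
  have "(sc p / tc p)^2 + (xc 1 p / tc p)^2 + (xc 2 p / tc p)^2 = ((sc p)^2 + x1^2 + x2^2) / t^2"
    unfolding t_x1_x2_def by (simp add: power_divide add_divide_distrib)
  also have "\<dots> = t^2 / t^2" using sc2 r2 by simp
  also have "\<dots> = 1" using t0 unfolding t_x1_x2_def by simp
  finally show "(sc p / tc p)^2 + (xc 1 p / tc p)^2 + (xc 2 p / tc p)^2 = 1" .
  show ts: "ts2 p = (tc p)^2 / gD p" using ts2_eq g0 unfolding tc_def by simp
  show "ts2 p > 0" using ts t0 g0 by simp
  have re: "r = sqrt (x1^2 + x2^2)" unfolding r_def rc_def t_x1_x2_def by simp
  have "sqrt (x1^2) \<le> sqrt (x1^2 + x2^2)" by (rule real_sqrt_le_mono) simp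
  then have x1r: "\<bar>x1\<bar> \<le> r" using re by simp
  have "sqrt (x2^2) \<le> sqrt (x1^2 + x2^2)" by (rule real_sqrt_le_mono) simp
  then have x2r: "\<bar>x2\<bar> \<le> r" using re by simp
  show "\<bar>xc 1 p\<bar> \<le> gD p" using x1r G gDe tr unfolding t_x1_x2_def by linarith
  show "\<bar>xc 2 p\<bar> \<le> gD p" using x2r G gDe tr unfolding t_x1_x2_def by linarith
  have "r^2 \<le> t * t" unfolding power2_eq_square by (intro mult_mono) (use tr r0 in linarith)+
  also have "\<dots> \<le> t * (t^2 - r^2)" using G tr r0 by (intro mult_left_mono) auto
  finally show "(xc 1 p)^2 + (xc 2 p)^2 \<le> tc p * gD p" using r2 gDe unfolding t_x1_x2_def by simp
  have "sqrt (t^2 - r^2) \<le> sqrt (t^2)" by (rule real_sqrt_le_mono) simp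
  then have "sc p \<le> t" using sce t0 unfolding t_x1_x2_def by simp
  then show "sc p / tc p \<le> 1" using t0 unfolding t_x1_x2_def by simp
  have tt: "t > 0" using t0 unfolding t_x1_x2_def .
  have "\<bar>x1 / t\<bar> = \<bar>x1\<bar> / t" using tt by (simp add: abs_divide)
  also have "\<dots> \<le> 1" using tt x1r tr by (simp add: pos_divide_le_eq)
  finally show "\<bar>xc 1 p / tc p\<bar> \<le> 1" unfolding t_x1_x2_def .
  have "\<bar>x2 / t\<bar> = \<bar>x2\<bar> / t" using tt by (simp add: abs_divide)
  also have "\<dots> \<le> 1" using tt x2r tr by (simp add: pos_divide_le_eq)
  finally show "\<bar>xc 2 p / tc p\<bar> \<le> 1" unfolding t_x1_x2_def .
qed


lemma ts2_diff: "p \<in> Kreg s0 s1 \<Longrightarrow> ts2 differentiable (at p)"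
  using ts2_hasder Kreg_facts(2) unfolding differentiable_def by blast

lemma pd_ts2: assumes "p \<in> Kreg s0 s1" shows "\<bar>pd \<alpha> ts2 p\<bar> \<le> 2 * ts2 p"
proof -
  have g: "gD p > 0" using Kreg_facts[OF assms] by simp
  define G where "G = gD p"
  define t x1 x2 where "t = tc p" "x1 = xc 1 p" "x2 = xc 2 p"
  have pe: "fst p = t" "fst (snd p) = x1" "snd (snd p) = x2" unfolding t_x1_x2_def tc_def xc_def by auto
  have e: "pd \<alpha> ts2 p = - (t ^ 2) * (inverse G * (2 * fst (evec \<alpha>) * t - 2 * fst (snd (evec \<alpha>)) * x1 - 2 * snd (snd (evec \<alpha>)) * x2) * inverse G) + (of_nat 2 * fst (evec \<alpha>) * t ^ (2-1)) / G"
    unfolding pd_def G_def pe[symmetric] by (simp flip: frechet_derivative_at[OF ts2_hasder[OF g]])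
  have Ge: "G = t^2 - x1^2 - x2^2" unfolding G_def gD_def pe[symmetric] ..
  have G0: "G > 0" using g G_def by simp
  have t0: "t > 0" using Kreg_facts(1)[OF assms] t_x1_x2_def by simp
  have T: "ts2 p = t^2 / G" using Kreg_facts(5)[OF assms] unfolding G_def t_x1_x2_def by simp
  have B1: "x1^2 + x2^2 \<le> t * G" using Kreg_facts(9)[OF assms] unfolding G_def t_x1_x2_def by simp
  have B2: "\<bar>x1\<bar> \<le> G" "\<bar>x2\<bar> \<le> G" using Kreg_facts(7,8)[OF assms] unfolding G_def t_x1_x2_def by simp_all
  consider "\<alpha> = 0" | "\<alpha> = 1" | "\<alpha> \<noteq> 0 \<and> \<alpha> \<noteq> 1" by blast
  then show ?thesis
  proof cases
    case 1
    have "pd \<alpha> ts2 p = 2 * t / G - 2 * t^3 / G^2"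
      unfolding e using 1 by (simp add: evec_def divide_inverse power2_eq_square power3_eq_cube)
    also have "\<dots> = 2 * t * (G - t^2) / G^2" using G0 by (simp add: field_simps power2_eq_square power3_eq_cube)
    also have "\<dots> = - (2 * t * (x1^2 + x2^2) / G^2)"
    proof -
      have num: "2 * t * (G - t^2) = -(2 * t * (x1^2 + x2^2))" unfolding Ge by (simp add: algebra_simps)
      show ?thesis by (simp only: num minus_divide_left)
    qed
    finally have "\<bar>pd \<alpha> ts2 p\<bar> = 2 * t * (x1^2 + x2^2) / G^2" using t0 by simp
    also have "\<dots> \<le> 2 * t * (t * G) / G^2" using B1 t0 by (intro divide_right_mono mult_left_mono) auto
    also have "\<dots> = 2 * ts2 p" using T G0 by (simp add: power2_eq_square)
    finally show ?thesis .
  next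
    case 2
    have "pd \<alpha> ts2 p = 2 * t^2 * x1 / G^2"
      unfolding e using 2 by (simp add: evec_def divide_inverse power2_eq_square)
    then have "\<bar>pd \<alpha> ts2 p\<bar> = 2 * t^2 * \<bar>x1\<bar> / G^2" by (simp add: abs_mult abs_divide)
    also have "\<dots> \<le> 2 * t^2 * G / G^2" using B2 by (intro divide_right_mono mult_left_mono) auto
    also have "\<dots> = 2 * ts2 p" using T G0 by (simp add: power2_eq_square)
    finally show ?thesis .
  next
    case 3
    have "pd \<alpha> ts2 p = 2 * t^2 * x2 / G^2"
      unfolding e using 3 by (simp add: evec_def divide_inverse power2_eq_square)
    then have "\<bar>pd \<alpha> ts2 p\<bar> = 2 * t^2 * \<bar>x2\<bar> / G^2" by (simp add: abs_mult abs_divide)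
    also have "\<dots> \<le> 2 * t^2 * G / G^2" using B2 by (intro divide_right_mono mult_left_mono) auto
    also have "\<dots> = 2 * ts2 p" using T G0 by (simp add: power2_eq_square)
    finally show ?thesis .
  qed
qed



definition Lm :: "real \<Rightarrow> real \<Rightarrow> real \<Rightarrow> real \<Rightarrow> R4 \<Rightarrow> R4" where
  "Lm \<sigma> \<xi>1 \<xi>2 c y = (\<sigma> * fst y, \<xi>1 * fst y + fst (snd y), \<xi>2 * fst y + fst (snd (snd y)), c * snd (snd (snd y)))"

lemma Lm_linear: "linear (Lm \<sigma> \<xi>1 \<xi>2 c)"
  by (rule linearI) (auto simp: Lm_def algebra_simps)

lemma Lm_inner: assumes "\<sigma> * \<sigma> = 1 - \<xi>1 * \<xi>1 - \<xi>2 * \<xi>2"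
  shows "inner (Lm \<sigma> \<xi>1 \<xi>2 c (a, b1, b2, u)) (Lm \<sigma> \<xi>1 \<xi>2 c (a', b1', b2', u')) =
    a * a' + b1 * b1' + b2 * b2' + c * c * u * u' + \<xi>1 * (a * b1' + a' * b1) + \<xi>2 * (a * b2' + a' * b2)"
proof -
  have "\<sigma> * (\<sigma> * (a * a')) = (\<sigma> * \<sigma>) * (a * a')" by (simp add: algebra_simps)
  also have "\<dots> = (1 - \<xi>1 * \<xi>1 - \<xi>2 * \<xi>2) * (a * a')" using assms by simp
  also have "\<dots> = a * a' - \<xi>1 * (\<xi>1 * (a * a')) - \<xi>2 * (\<xi>2 * (a * a'))" by (simp add: algebra_simps)
  finally have h: "\<sigma> * (\<sigma> * (a * a')) = a * a' - \<xi>1 * (\<xi>1 * (a * a')) - \<xi>2 * (\<xi>2 * (a * a'))" .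
  show ?thesis unfolding Lm_def apply (simp add: algebra_simps) using h by linarith
qed

lemma Lm_norm_le: assumes "0 \<le> \<sigma>" "\<sigma> \<le> 1" "\<bar>\<xi>1\<bar> \<le> 1" "\<bar>\<xi>2\<bar> \<le> 1" "c > 0"
  shows "norm (Lm \<sigma> \<xi>1 \<xi>2 c (e0, e1, e2, e3)) \<le> 3 * \<bar>e0\<bar> + \<bar>e1\<bar> + \<bar>e2\<bar> + c * \<bar>e3\<bar>"
proof -
  have n: "norm ((a::real), (b::real), (d::real), (f::real)) \<le> \<bar>a\<bar> + \<bar>b\<bar> + \<bar>d\<bar> + \<bar>f\<bar>" for a b d f
  proof -
    have "norm (a, b, d, f) \<le> norm a + norm (b, d, f)" by (rule norm_Pair_le)
    also have "norm (b, d, f) \<le> norm b + norm (d, f)" by (rule norm_Pair_le)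
    also have "norm (d, f) \<le> norm d + norm f" by (rule norm_Pair_le)
    finally show ?thesis by simp
  qed
  have "norm (Lm \<sigma> \<xi>1 \<xi>2 c (e0, e1, e2, e3)) \<le> \<bar>\<sigma> * e0\<bar> + \<bar>\<xi>1 * e0 + e1\<bar> + \<bar>\<xi>2 * e0 + e2\<bar> + \<bar>c * e3\<bar>"
    unfolding Lm_def using n by simp
  also have "\<dots> \<le> \<bar>e0\<bar> + (\<bar>e0\<bar> + \<bar>e1\<bar>) + (\<bar>e0\<bar> + \<bar>e2\<bar>) + c * \<bar>e3\<bar>"
  proof -
    have 1: "\<bar>\<sigma> * e0\<bar> \<le> \<bar>e0\<bar>" using assms by (simp add: abs_mult mult_left_le_one_le)
    have 2: "\<bar>\<xi>1 * e0\<bar> \<le> \<bar>e0\<bar>" using assms by (simp add: abs_mult mult_left_le_one_le)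
    have 3: "\<bar>\<xi>2 * e0\<bar> \<le> \<bar>e0\<bar>" using assms by (simp add: abs_mult mult_left_le_one_le)
    have 4: "\<bar>c * e3\<bar> = c * \<bar>e3\<bar>" using assms by (simp add: abs_mult)
    show ?thesis using 1 2 3 4 abs_triangle_ineq[of "\<xi>1 * e0" e1] abs_triangle_ineq[of "\<xi>2 * e0" e2] by linarith
  qed
  also have "\<dots> = 3 * \<bar>e0\<bar> + \<bar>e1\<bar> + \<bar>e2\<bar> + c * \<bar>e3\<bar>" by simp
  finally show ?thesis .
qed

lemma Lm_Dz: "norm (Lm \<sigma> \<xi>1 \<xi>2 c (a, b1, b2, 0)) \<le> norm (Lm \<sigma> \<xi>1 \<xi>2 c (a, b1, b2, u))"
  unfolding norm_le by (simp add: Lm_def)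

lemma Lm_u: assumes "c > 0" shows "c * \<bar>u\<bar> \<le> norm (Lm \<sigma> \<xi>1 \<xi>2 c (a, b1, b2, u))"
proof -
  have "norm ((0::real), (0::real), (0::real), c * u) \<le> norm (Lm \<sigma> \<xi>1 \<xi>2 c (a, b1, b2, u))"
    unfolding norm_le by (simp add: Lm_def)
  then show ?thesis using assms by (simp add: abs_mult)
qed

lemma ec_Lm: "ec c u p = (norm (Lm (sc p / tc p) (xc 1 p / tc p) (xc 2 p / tc p) c (pd 0 u p, pd 1 u p, pd 2 u p, u p)))^2"
  unfolding ec_def Lm_def power2_norm_eq_inner by (simp add: power2_eq_square)

lemma Pc_fun: "Pc Q i j k = (\<lambda>q. - (1/3) * Q i j k q)"
  by (rule ext) (simp add: Pc_def)

lemma Pc_diff: "Q i j k differentiable (at p) \<Longrightarrow> Pc Q i j k differentiable (at p)"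
  unfolding Pc_fun by (intro differentiable_mult differentiable_const)

lemma PT_diff: "Q i j k differentiable (at p) \<Longrightarrow> p \<in> Kreg s0 s1 \<Longrightarrow> (\<lambda>q. Pc Q i j k q * ts2 q) differentiable (at p)"
  by (intro differentiable_mult Pc_diff ts2_diff)

lemma pd_Pc: "Q i j k differentiable (at p) \<Longrightarrow> pd \<alpha> (Pc Q i j k) p = - (1/3) * pd \<alpha> (Q i j k) p"
  unfolding Pc_fun by (rule pd_cmult)

lemma dPT_bound:
  assumes "Q i j k differentiable (at p)" "p \<in> Kreg s0 s1"
  shows "\<bar>pd \<alpha> (\<lambda>q. Pc Q i j k q * ts2 q) p * u\<bar> \<le> (1/3) * \<bar>ts2 p * u * pd \<alpha> (Q i j k) p\<bar> + (2/3) * \<bar>ts2 p * Q i j k p * u\<bar>"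
proof -
  have e: "pd \<alpha> (\<lambda>q. Pc Q i j k q * ts2 q) p = - (1/3) * pd \<alpha> (Q i j k) p * ts2 p + Pc Q i j k p * pd \<alpha> ts2 p"
    using pd_mult[OF Pc_diff[of Q i j k p, OF assms(1)] ts2_diff[OF assms(2)]] pd_Pc[of Q i j k p, OF assms(1)] by simp
  have T: "\<bar>pd \<alpha> ts2 p\<bar> \<le> 2 * ts2 p" by (rule pd_ts2[OF assms(2)])
  have "\<bar>pd \<alpha> (\<lambda>q. Pc Q i j k q * ts2 q) p * u\<bar> \<le> \<bar>- (1/3) * pd \<alpha> (Q i j k) p * ts2 p * u\<bar> + \<bar>Pc Q i j k p * pd \<alpha> ts2 p * u\<bar>"
    unfolding e by (simp add: algebra_simps abs_triangle_ineq)
  also have "\<bar>- (1/3) * pd \<alpha> (Q i j k) p * ts2 p * u\<bar> = (1/3) * \<bar>ts2 p * u * pd \<alpha> (Q i j k) p\<bar>"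
    by (simp add: abs_mult)
  also have "\<bar>Pc Q i j k p * pd \<alpha> ts2 p * u\<bar> = (1/3) * \<bar>Q i j k p * u\<bar> * \<bar>pd \<alpha> ts2 p\<bar>"
    by (simp add: Pc_def abs_mult)
  also have "\<dots> \<le> (1/3) * \<bar>Q i j k p * u\<bar> * (2 * ts2 p)"
    using T by (intro mult_left_mono) auto
  also have "\<dots> = (2/3) * \<bar>ts2 p * Q i j k p * u\<bar>"
    using Kreg_facts(6)[OF assms(2)] by (simp add: abs_mult)
  finally show ?thesis by simp
qed



lemma pd_wf:
  assumes p: "p \<in> Kreg s0 s1" and vd: "\<forall>i\<in>{1..N}. v i differentiable (at p)"
    and Qd: "\<forall>i\<in>{1..N}. \<forall>j\<in>{1..N}. \<forall>k\<in>{1..N}. Q i j k differentiable (at p)" and i: "i \<in> {1..N}"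
  shows "pd \<alpha> (wf N v Q i) p = pd \<alpha> (v i) p + (\<Sum>j\<in>{1..N}. \<Sum>k\<in>{1..N}.
     pd \<alpha> (\<lambda>q. Pc Q i j k q * ts2 q) p * v j p * v k p + (Pc Q i j k p * ts2 p) * pd \<alpha> (v j) p * v k p
     + (Pc Q i j k p * ts2 p) * v j p * pd \<alpha> (v k) p)"
proof -
  have wfe: "wf N v Q i = (\<lambda>q. v i q + (\<Sum>j\<in>{1..N}. \<Sum>k\<in>{1..N}. Pc Q i j k q * ts2 q * v j q * v k q))"
    by (rule ext) (simp add: wf_def)
  have dPT: "(\<lambda>q. Pc Q i j k q * ts2 q) differentiable (at p)" if "j \<in> {1..N}" "k \<in> {1..N}" for j k
    using PT_diff[of Q i j k p] Qd i p that by blast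
  have dvj: "v j differentiable (at p)" if "j \<in> {1..N}" for j using vd that by blast
  have dPTv: "(\<lambda>q. Pc Q i j k q * ts2 q * v j q) differentiable (at p)" if "j \<in> {1..N}" "k \<in> {1..N}" for j k
    using differentiable_mult[OF dPT[OF that] dvj[OF that(1)]] .
  have dterm: "(\<lambda>q. Pc Q i j k q * ts2 q * v j q * v k q) differentiable (at p)" if "j \<in> {1..N}" "k \<in> {1..N}" for j k
    using differentiable_mult[OF dPTv[OF that] dvj[OF that(2)]] .
  have dinner: "(\<lambda>q. \<Sum>k\<in>{1..N}. Pc Q i j k q * ts2 q * v j q * v k q) differentiable (at p)" if "j \<in> {1..N}" for j
    using dterm that by (intro differentiable_sum) auto
  have douter: "(\<lambda>q. \<Sum>j\<in>{1..N}. \<Sum>k\<in>{1..N}. Pc Q i j k q * ts2 q * v j q * v k q) differentiable (at p)"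
    using dinner by (intro differentiable_sum) auto
  have "pd \<alpha> (wf N v Q i) p = pd \<alpha> (v i) p + pd \<alpha> (\<lambda>q. \<Sum>j\<in>{1..N}. \<Sum>k\<in>{1..N}. Pc Q i j k q * ts2 q * v j q * v k q) p"
    unfolding wfe by (rule pd_add[OF dvj[OF i] douter])
  also have "pd \<alpha> (\<lambda>q. \<Sum>j\<in>{1..N}. \<Sum>k\<in>{1..N}. Pc Q i j k q * ts2 q * v j q * v k q) p
      = (\<Sum>j\<in>{1..N}. pd \<alpha> (\<lambda>q. \<Sum>k\<in>{1..N}. Pc Q i j k q * ts2 q * v j q * v k q) p)"
    by (rule pd_sum[where f="\<lambda>j q. \<Sum>k\<in>{1..N}. Pc Q i j k q * ts2 q * v j q * v k q"]) (use dinner in auto)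
  also have "\<dots> = (\<Sum>j\<in>{1..N}. \<Sum>k\<in>{1..N}. pd \<alpha> (\<lambda>q. Pc Q i j k q * ts2 q * v j q * v k q) p)"
  proof (rule sum.cong[OF refl])
    fix j assume j: "j \<in> {1..N}"
    show "pd \<alpha> (\<lambda>q. \<Sum>k\<in>{1..N}. Pc Q i j k q * ts2 q * v j q * v k q) p = (\<Sum>k\<in>{1..N}. pd \<alpha> (\<lambda>q. Pc Q i j k q * ts2 q * v j q * v k q) p)"
      by (rule pd_sum[where f="\<lambda>k q. Pc Q i j k q * ts2 q * v j q * v k q"]) (use dterm j in auto)
  qed
  also have "\<dots> = (\<Sum>j\<in>{1..N}. \<Sum>k\<in>{1..N}.
     pd \<alpha> (\<lambda>q. Pc Q i j k q * ts2 q) p * v j p * v k p + (Pc Q i j k p * ts2 p) * pd \<alpha> (v j) p * v k p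
     + (Pc Q i j k p * ts2 p) * v j p * pd \<alpha> (v k) p)"
  proof (intro sum.cong refl)
    fix j k assume j: "j \<in> {1..N}" and k: "k \<in> {1..N}"
    have 1: "pd \<alpha> (\<lambda>q. Pc Q i j k q * ts2 q * v j q * v k q) p = pd \<alpha> (\<lambda>q. Pc Q i j k q * ts2 q * v j q) p * v k p + (Pc Q i j k p * ts2 p * v j p) * pd \<alpha> (v k) p"
      by (rule pd_mult[where f="\<lambda>q. Pc Q i j k q * ts2 q * v j q" and g="v k", OF dPTv[OF j k] dvj[OF k]])
    have 2: "pd \<alpha> (\<lambda>q. Pc Q i j k q * ts2 q * v j q) p = pd \<alpha> (\<lambda>q. Pc Q i j k q * ts2 q) p * v j p + (Pc Q i j k p * ts2 p) * pd \<alpha> (v j) p"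
      by (rule pd_mult[where f="\<lambda>q. Pc Q i j k q * ts2 q" and g="v j", OF dPT[OF j k] dvj[OF j]])
    show "pd \<alpha> (\<lambda>q. Pc Q i j k q * ts2 q * v j q * v k q) p = pd \<alpha> (\<lambda>q. Pc Q i j k q * ts2 q) p * v j p * v k p + (Pc Q i j k p * ts2 p) * pd \<alpha> (v j) p * v k p
     + (Pc Q i j k p * ts2 p) * v j p * pd \<alpha> (v k) p"
      unfolding 1 2 by (simp add: algebra_simps)
  qed
  finally show ?thesis .
qed



lemma main_point:
  fixes N :: nat and c \<epsilon> K :: real and v :: "nat \<Rightarrow> pt \<Rightarrow> real" and Q :: "nat \<Rightarrow> nat \<Rightarrow> nat \<Rightarrow> pt \<Rightarrow> real"
  assumes N: "N \<ge> 1" and c: "c > 0" and K: "K = 5 / c + 1" and epsK: "8 * \<epsilon> * (K + 2) * (real N)^2 \<le> 1" and eps0: "\<epsilon> \<ge> 0"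
  and vd: "\<forall>i\<in>{1..N}. \<forall>p\<in>Kreg s0 s1. v i differentiable (at p)"
  and Qd: "\<forall>i\<in>{1..N}. \<forall>j\<in>{1..N}. \<forall>k\<in>{1..N}. \<forall>p\<in>Kreg s0 s1. Q i j k differentiable (at p)"
  and H4: "\<forall>i\<in>{1..N}. \<forall>j\<in>{1..N}. \<forall>k\<in>{1..N}. \<forall>p\<in>Kreg s0 s1.
        \<bar>ts2 p * Q i j k p * v i p\<bar> + \<bar>ts2 p * Q i j k p * v j p\<bar> + \<bar>ts2 p * Q i j k p * v k p\<bar> \<le> \<epsilon>"
  and H5: "\<forall>i\<in>{1..N}. \<forall>j\<in>{1..N}. \<forall>k\<in>{1..N}. \<forall>\<alpha>\<in>{0,1,2}. \<forall>p\<in>Kreg s0 s1.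
        \<bar>ts2 p * v j p * pd \<alpha> (Q i j k) p\<bar> + \<bar>ts2 p * v k p * pd \<alpha> (Q i j k) p\<bar> \<le> \<epsilon>"
  and p: "p \<in> Kreg s0 s1"
  shows "(1/4) * eQc N c Q v p \<le> (\<Sum>i\<in>{1..N}. ec c (v i) p) \<and>
        (\<Sum>i\<in>{1..N}. ec c (v i) p) \<le> 4 * eQc N c Q v p"
proof -
  define \<sigma> \<xi>1 \<xi>2 where "\<sigma> = sc p / tc p" "\<xi>1 = xc 1 p / tc p" "\<xi>2 = xc 2 p / tc p"
  define L where "L = Lm \<sigma> \<xi>1 \<xi>2 c"
  define u where "u j = v j p" for j
  define Z where "Z j = L (pd 0 (v j) p, pd 1 (v j) p, pd 2 (v j) p, v j p)" for j
  define Dz where "Dz j = L (pd 0 (v j) p, pd 1 (v j) p, pd 2 (v j) p, 0)" for j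
  define \<pi> where "\<pi> i j k = Pc Q i j k p * ts2 p" for i j k
  define dPT where "dPT \<alpha> i j k = pd \<alpha> (\<lambda>q. Pc Q i j k q * ts2 q) p" for \<alpha> i j k
  define Ev where "Ev i j k = L (dPT 0 i j k * u j * u k, dPT 1 i j k * u j * u k, dPT 2 i j k * u j * u k, \<pi> i j k * u j * u k)" for i j k
  define W where "W i = L (pd 0 (wf N v Q i) p, pd 1 (wf N v Q i) p, pd 2 (wf N v Q i) p, wf N v Q i p)" for i
  define \<rho> where "\<rho> i j k = 2 * \<pi> i j k * u i" for i j k
  have vdp: "\<forall>i\<in>{1..N}. v i differentiable (at p)" using vd p by blast
  have Qdp: "\<forall>i\<in>{1..N}. \<forall>j\<in>{1..N}. \<forall>k\<in>{1..N}. Q i j k differentiable (at p)" using Qd p by blast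
  have KF: "tc p > 0" "(sc p / tc p)^2 + (xc 1 p / tc p)^2 + (xc 2 p / tc p)^2 = 1"
     "sc p / tc p \<le> 1" "\<bar>xc 1 p / tc p\<bar> \<le> 1" "\<bar>xc 2 p / tc p\<bar> \<le> 1" "sc p \<ge> 0"
    using Kreg_facts[OF p] by auto
  have sig: "\<sigma> * \<sigma> = 1 - \<xi>1 * \<xi>1 - \<xi>2 * \<xi>2" using KF(2) unfolding \<sigma>_\<xi>1_\<xi>2_def power2_eq_square by linarith
  have sig0: "0 \<le> \<sigma>" using KF unfolding \<sigma>_\<xi>1_\<xi>2_def by simp
  have lin: "linear L" unfolding L_def by (rule Lm_linear)
  have Kn: "K \<ge> 0" using K c by simp
  have Wd: "W i = Z i + (\<Sum>j\<in>{1..N}. \<Sum>k\<in>{1..N}. (\<pi> i j k * u k) *\<^sub>R Dz j + (\<pi> i j k * u j) *\<^sub>R Dz k + Ev i j k)"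
    if i: "i \<in> {1..N}" for i
  proof -
    note pw = pd_wf[OF p vdp Qdp i]
    have jet: "(pd 0 (wf N v Q i) p, pd 1 (wf N v Q i) p, pd 2 (wf N v Q i) p, wf N v Q i p) =
      (pd 0 (v i) p, pd 1 (v i) p, pd 2 (v i) p, v i p) + (\<Sum>j\<in>{1..N}. \<Sum>k\<in>{1..N}.
        (\<pi> i j k * u k) *\<^sub>R (pd 0 (v j) p, pd 1 (v j) p, pd 2 (v j) p, 0)
      + (\<pi> i j k * u j) *\<^sub>R (pd 0 (v k) p, pd 1 (v k) p, pd 2 (v k) p, 0)
      + (dPT 0 i j k * u j * u k, dPT 1 i j k * u j * u k, dPT 2 i j k * u j * u k, \<pi> i j k * u j * u k))"
      by (simp add: prod_eq_iff fst_sum snd_sum pw wf_def \<pi>_def dPT_def u_def algebra_simps)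
    have "W i = L ((pd 0 (v i) p, pd 1 (v i) p, pd 2 (v i) p, v i p) + (\<Sum>j\<in>{1..N}. \<Sum>k\<in>{1..N}.
        (\<pi> i j k * u k) *\<^sub>R (pd 0 (v j) p, pd 1 (v j) p, pd 2 (v j) p, 0)
      + (\<pi> i j k * u j) *\<^sub>R (pd 0 (v k) p, pd 1 (v k) p, pd 2 (v k) p, 0)
      + (dPT 0 i j k * u j * u k, dPT 1 i j k * u j * u k, dPT 2 i j k * u j * u k, \<pi> i j k * u j * u k)))"
      unfolding W_def jet ..
    also have "\<dots> = Z i + (\<Sum>j\<in>{1..N}. \<Sum>k\<in>{1..N}. (\<pi> i j k * u k) *\<^sub>R Dz j + (\<pi> i j k * u j) *\<^sub>R Dz k + Ev i j k)"
      by (simp only: linear_add[OF lin] linear_sum[OF lin] linear_scale[OF lin] o_def Z_def Dz_def Ev_def)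
    finally show ?thesis .
  qed
  have Dzb: "norm (Dz j) \<le> norm (Z j)" for j unfolding Dz_def Z_def L_def by (rule Lm_Dz)
  have ub: "c * \<bar>u j\<bar> \<le> norm (Z j)" for j unfolding Z_def L_def u_def by (rule Lm_u[OF c])
  have H4': "\<bar>ts2 p * Q i j k p * v i p\<bar> + \<bar>ts2 p * Q i j k p * v j p\<bar> + \<bar>ts2 p * Q i j k p * v k p\<bar> \<le> \<epsilon>"
    if "i \<in> {1..N}" "j \<in> {1..N}" "k \<in> {1..N}" for i j k using H4 p that by blast
  have H5': "\<bar>ts2 p * v j p * pd \<alpha> (Q i j k) p\<bar> + \<bar>ts2 p * v k p * pd \<alpha> (Q i j k) p\<bar> \<le> \<epsilon>"
    if "i \<in> {1..N}" "j \<in> {1..N}" "k \<in> {1..N}" "\<alpha> \<in> {0,1,2}" for i j k \<alpha> using H5 p that by blast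
  have piu: "\<bar>\<pi> i j k * u m\<bar> = (1/3) * \<bar>ts2 p * Q i j k p * v m p\<bar>" for i j k m
    unfolding \<pi>_def u_def Pc_def by (simp add: abs_mult)
  have pk: "\<bar>\<pi> i j k * u k\<bar> \<le> \<epsilon>" if "i \<in> {1..N}" "j \<in> {1..N}" "k \<in> {1..N}" for i j k
    using H4'[OF that] piu[of i j k k] by simp
  have pj: "\<bar>\<pi> i j k * u j\<bar> \<le> \<epsilon>" if "i \<in> {1..N}" "j \<in> {1..N}" "k \<in> {1..N}" for i j k
    using H4'[OF that] piu[of i j k j] by simp
  have rhob: "\<bar>\<rho> i j k\<bar> \<le> \<epsilon>" if "i \<in> {1..N}" "j \<in> {1..N}" "k \<in> {1..N}" for i j k
  proof -
    have "\<bar>\<rho> i j k\<bar> = 2 * \<bar>\<pi> i j k * u i\<bar>" unfolding \<rho>_def by (simp add: abs_mult)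
    then show ?thesis using H4'[OF that] piu[of i j k i] by simp
  qed
  have dPTb: "\<bar>dPT \<alpha> i j k * u j\<bar> \<le> \<epsilon>" if "i \<in> {1..N}" "j \<in> {1..N}" "k \<in> {1..N}" "\<alpha> \<in> {0,1,2}" for i j k \<alpha>
  proof -
    have "\<bar>dPT \<alpha> i j k * u j\<bar> \<le> (1/3) * \<bar>ts2 p * v j p * pd \<alpha> (Q i j k) p\<bar> + (2/3) * \<bar>ts2 p * Q i j k p * v j p\<bar>"
      unfolding dPT_def u_def using dPT_bound[of Q i j k p s0 s1 \<alpha> "v j p"] Qdp that p by blast
    then show ?thesis using H4'[of i j k] H5'[of i j k \<alpha>] that by simp
  qed
  have Evb: "norm (Ev i j k) \<le> K * \<epsilon> * norm (Z k)" if ijk: "i \<in> {1..N}" "j \<in> {1..N}" "k \<in> {1..N}" for i j k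
  proof -
    have "norm (Ev i j k) \<le> 3 * \<bar>dPT 0 i j k * u j * u k\<bar> + \<bar>dPT 1 i j k * u j * u k\<bar> + \<bar>dPT 2 i j k * u j * u k\<bar> + c * \<bar>\<pi> i j k * u j * u k\<bar>"
      unfolding Ev_def L_def by (rule Lm_norm_le) (use KF sig0 c in \<open>auto simp: \<sigma>_\<xi>1_\<xi>2_def\<close>)
    also have "\<dots> \<le> 3 * (\<epsilon> * \<bar>u k\<bar>) + \<epsilon> * \<bar>u k\<bar> + \<epsilon> * \<bar>u k\<bar> + c * (\<epsilon> * \<bar>u k\<bar>)"
    proof -
      have a: "\<bar>dPT \<alpha> i j k * u j * u k\<bar> \<le> \<epsilon> * \<bar>u k\<bar>" if "\<alpha> \<in> {0,1,2}" for \<alpha>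
        unfolding abs_mult[of _ "u k"] by (rule mult_right_mono) (use dPTb[OF ijk that] in auto)
      have b: "\<bar>\<pi> i j k * u j * u k\<bar> \<le> \<epsilon> * \<bar>u k\<bar>"
        unfolding abs_mult[of _ "u k"] by (rule mult_right_mono) (use pj[OF ijk] in auto)
      have b': "c * \<bar>\<pi> i j k * u j * u k\<bar> \<le> c * (\<epsilon> * \<bar>u k\<bar>)" using mult_left_mono[OF b, of c] c by simp
      show ?thesis using a[of 0] a[of 1] a[of 2] b' by simp
    qed
    also have "\<dots> = \<epsilon> * (5 * \<bar>u k\<bar>) + \<epsilon> * (c * \<bar>u k\<bar>)" by (simp add: algebra_simps)
    also have "\<dots> \<le> \<epsilon> * (5 / c * norm (Z k)) + \<epsilon> * norm (Z k)"
    proof -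
      have "\<bar>u k\<bar> \<le> norm (Z k) / c" using ub[of k] c by (simp add: field_simps)
      then have "5 * \<bar>u k\<bar> \<le> 5 / c * norm (Z k)" by simp
      then show ?thesis using ub[of k] eps0 by (intro add_mono mult_left_mono) auto
    qed
    also have "\<dots> = K * \<epsilon> * norm (Z k)" unfolding K by (simp add: algebra_simps)
    finally show ?thesis .
  qed
  note C = core[of N W Z \<pi> u Dz Ev \<epsilon> K \<rho>, OF N Wd Dzb pk pj Evb rhob eps0 Kn epsK]
  have ecZ: "(\<Sum>i\<in>{1..N}. ec c (v i) p) = (\<Sum>i\<in>{1..N}. norm (Z i)^2)"
    unfolding ec_Lm Z_def L_def \<sigma>_\<xi>1_\<xi>2_def ..
  have eqi: "2 * (V0 N c v Q i p - (\<Sum>a\<in>{1,2}. xc a p / tc p * Va N v Q i a p)) =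
      norm (W i)^2 + (\<Sum>j\<in>{1..N}. \<Sum>k\<in>{1..N}. \<rho> i j k * inner (Z j) (Z k))" for i
  proof -
    define A0 A1 A2 \<omega> where "A0 = pd 0 (wf N v Q i) p" "A1 = pd 1 (wf N v Q i) p" "A2 = pd 2 (wf N v Q i) p" "\<omega> = wf N v Q i p"
    define SB where "SB = (\<Sum>j\<in>{1..N}. \<Sum>k\<in>{1..N}. Pc Q i j k p * ts2 p * v i p *
          (pd 0 (v j) p * pd 0 (v k) p + (\<Sum>a\<in>{1,2}. pd a (v j) p * pd a (v k) p) + c^2 * v j p * v k p))"
    define SC where "SC a = (\<Sum>j\<in>{1..N}. \<Sum>k\<in>{1..N}. Pc Q i j k p * ts2 p * v i p *
          (pd 0 (v j) p * pd a (v k) p + pd 0 (v k) p * pd a (v j) p))" for a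
    have V0e: "V0 N c v Q i p = (1/2) * (\<Sum>\<alpha>\<in>{0,1,2}. (pd \<alpha> (wf N v Q i) p)^2) + (1/2) * c^2 * (wf N v Q i p)^2 + SB"
      unfolding V0_def SB_def ..
    have Vae: "Va N v Q i a p = - (pd 0 (wf N v Q i) p * pd a (wf N v Q i) p + SC a)" for a
      unfolding Va_def SC_def ..
    have Wn: "norm (W i)^2 = A0 * A0 + A1 * A1 + A2 * A2 + c * c * \<omega> * \<omega> + \<xi>1 * (A0 * A1 + A0 * A1) + \<xi>2 * (A0 * A2 + A0 * A2)"
      unfolding power2_norm_eq_inner W_def L_def A0_A1_A2_\<omega>_def[symmetric] by (rule Lm_inner[OF sig])
    have X1: "(\<Sum>j\<in>{1..N}. \<Sum>k\<in>{1..N}. \<rho> i j k * inner (Z j) (Z k)) =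
       (\<Sum>j\<in>{1..N}. \<Sum>k\<in>{1..N}. 2 * (Pc Q i j k p * ts2 p * v i p *
          (pd 0 (v j) p * pd 0 (v k) p + (\<Sum>a\<in>{1,2}. pd a (v j) p * pd a (v k) p) + c^2 * v j p * v k p))
        + 2 * \<xi>1 * (Pc Q i j k p * ts2 p * v i p * (pd 0 (v j) p * pd 1 (v k) p + pd 0 (v k) p * pd 1 (v j) p))
        + 2 * \<xi>2 * (Pc Q i j k p * ts2 p * v i p * (pd 0 (v j) p * pd 2 (v k) p + pd 0 (v k) p * pd 2 (v j) p)))"
    proof (intro sum.cong refl)
      fix j k
      show "\<rho> i j k * inner (Z j) (Z k) = 2 * (Pc Q i j k p * ts2 p * v i p *
          (pd 0 (v j) p * pd 0 (v k) p + (\<Sum>a\<in>{1,2}. pd a (v j) p * pd a (v k) p) + c^2 * v j p * v k p))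
        + 2 * \<xi>1 * (Pc Q i j k p * ts2 p * v i p * (pd 0 (v j) p * pd 1 (v k) p + pd 0 (v k) p * pd 1 (v j) p))
        + 2 * \<xi>2 * (Pc Q i j k p * ts2 p * v i p * (pd 0 (v j) p * pd 2 (v k) p + pd 0 (v k) p * pd 2 (v j) p))"
        unfolding Z_def L_def Lm_inner[OF sig] \<rho>_def \<pi>_def u_def by (simp add: algebra_simps power2_eq_square)
    qed
    have X2: "(\<Sum>j\<in>{1..N}. \<Sum>k\<in>{1..N}. \<rho> i j k * inner (Z j) (Z k)) = 2 * SB + 2 * \<xi>1 * SC 1 + 2 * \<xi>2 * SC 2"
      unfolding X1 SB_def SC_def by (simp add: sum_distrib_left sum.distrib)
    have s2: "(\<Sum>a\<in>{1,2}. xc a p / tc p * Va N v Q i a p) = \<xi>1 * Va N v Q i 1 p + \<xi>2 * Va N v Q i 2 p"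
      by (simp add: \<sigma>_\<xi>1_\<xi>2_def)
    have s3: "(\<Sum>\<alpha>\<in>{0,1,2}. (pd \<alpha> (wf N v Q i) p)^2) = A0^2 + A1^2 + A2^2"
      by (simp add: A0_A1_A2_\<omega>_def)
    show ?thesis
      unfolding X2 Wn s2 unfolding V0e s3 unfolding Vae unfolding A0_A1_A2_\<omega>_def[symmetric]
      by (simp add: power2_eq_square algebra_simps)
  qed
  have eQZ: "eQc N c Q v p = (\<Sum>i\<in>{1..N}. norm (W i)^2 + (\<Sum>j\<in>{1..N}. \<Sum>k\<in>{1..N}. \<rho> i j k * inner (Z j) (Z k)))"
    unfolding eQc_def sum_distrib_left eqi ..
  show ?thesis using C unfolding ecZ eQZ .
qed


theorem lemma3p1:
  fixes N :: nat and c :: real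
  assumes "N \<ge> 1" and "c > 0"
  shows "\<exists>\<epsilon>>0. \<forall>(s0::real) (s1::real) (v :: nat \<Rightarrow> pt \<Rightarrow> real) (Q :: nat \<Rightarrow> nat \<Rightarrow> nat \<Rightarrow> pt \<Rightarrow> real).
     (\<forall>i\<in>{1..N}. \<forall>p\<in>Kreg s0 s1. v i differentiable (at p)) \<longrightarrow>
     (\<forall>i\<in>{1..N}. \<forall>j\<in>{1..N}. \<forall>k\<in>{1..N}. \<forall>p\<in>Kreg s0 s1. Q i j k differentiable (at p)) \<longrightarrow>
     (\<forall>i\<in>{1..N}. \<forall>j\<in>{1..N}. \<forall>k\<in>{1..N}. \<forall>p\<in>Kreg s0 s1. Q i j k p = Q i k j p) \<longrightarrow>
     (\<forall>i\<in>{1..N}. \<forall>j\<in>{1..N}. \<forall>k\<in>{1..N}. \<forall>p\<in>Kreg s0 s1.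
        \<bar>ts2 p * Q i j k p * v i p\<bar> + \<bar>ts2 p * Q i j k p * v j p\<bar> + \<bar>ts2 p * Q i j k p * v k p\<bar> \<le> \<epsilon>) \<longrightarrow>
     (\<forall>i\<in>{1..N}. \<forall>j\<in>{1..N}. \<forall>k\<in>{1..N}. \<forall>\<alpha>\<in>{0,1,2}. \<forall>p\<in>Kreg s0 s1.
        \<bar>ts2 p * v j p * pd \<alpha> (Q i j k) p\<bar> + \<bar>ts2 p * v k p * pd \<alpha> (Q i j k) p\<bar> \<le> \<epsilon>) \<longrightarrow>
     (\<forall>p\<in>Kreg s0 s1.
        (1/4) * eQc N c Q v p \<le> (\<Sum>i\<in>{1..N}. ec c (v i) p) \<and>
        (\<Sum>i\<in>{1..N}. ec c (v i) p) \<le> 4 * eQc N c Q v p)"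
  proof -
  define K :: real where "K = 5 / c + 1"
  define \<epsilon> :: real where "\<epsilon> = 1 / (8 * (K + 2) * (real N)^2)"
  have "5 / c > 0" using assms by simp
  then have Kp: "K + 2 > 0" unfolding K_def by linarith
  have Np: "real N > 0" using assms by simp
  have ep: "\<epsilon> > 0" unfolding \<epsilon>_def using Kp Np by simp
  have eK: "8 * \<epsilon> * (K + 2) * (real N)^2 \<le> 1" unfolding \<epsilon>_def using Kp Np by simp
  show ?thesis
    apply (rule exI[of _ \<epsilon>])
    apply (rule conjI[OF ep])
    apply (intro allI impI ballI)
    apply (rule main_point[OF assms(1) assms(2) K_def eK less_imp_le[OF ep]])
        apply assumption+
    done
qed

end
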